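(* Let $X$ be a $\delta$-hyperbolic metric space. Then $\mathrm{E}(X)$ is $\delta$-hyperbolic as well. If, in addition, $X$ is geodesic, then every point of $\mathrm{E}(X)$ is within distance $\delta$ of $\mathrm{e}(X)$; if $X$ is discretely geodesic, then every point of $\mathrm{E}(X)$ is within distance $\delta+\frac12$ of $\mathrm{e}(X)$.
   Context: $X$ is $\delta$-hyperbolic ($\delta\ge0$) if $d(w,x)+d(y,z)\le\max\{d(w,y)+d(x,z),\,d(x,y)+d(w,z)\}+\delta$ for all $w,x,y,z\in X$. For a metric space $(X,d)$ let $\Delta(X)=\{f\colon X\to\mathbb{R}: f(x)+f(y)\ge d(x,y)\ \forall x,y\}$ with the pointwise order, $\mathrm{E}(X)$ the set of its minimal elements, metrized by $\|f-g\|_\infty=\sup_x|f(x)-g(x)|$, and $\mathrm{e}\colon X\to\mathrm{E}(X)$, $\mathrm{e}(y)=d(\cdot,y)$ (an isometric embedding). $X$ is discretely geodesic if $d$ is integer valued and any $x,y$ are joined by an isometric embedding $\gamma\colon\{0,\dots,d(x,y)\}\to X$ with $\gamma(0)=x,\gamma(d(x,y))=y$. *)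

theory Defs
  imports Complex_Main
begin

definition hyperbolic_on :: "'b set \<Rightarrow> ('b \<Rightarrow> 'b \<Rightarrow> real) \<Rightarrow> real \<Rightarrow> bool" where
  "hyperbolic_on S d \<delta> \<longleftrightarrow> (\<forall>w\<in>S. \<forall>x\<in>S. \<forall>y\<in>S. \<forall>z\<in>S.
     d w x + d y z \<le> max (d w y + d x z) (d x y + d w z) + \<delta>)"

definition Delta :: "('a::metric_space \<Rightarrow> real) set" where
  "Delta = {f. \<forall>x y. dist x y \<le> f x + f y}"

definition Ehull :: "('a::metric_space \<Rightarrow> real) set" where
  "Ehull = {f \<in> Delta. \<forall>g \<in> Delta. g \<le> f \<longrightarrow> g = f}"

definition supdist :: "('a \<Rightarrow> real) \<Rightarrow> ('a \<Rightarrow> real) \<Rightarrow> real" where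
  "supdist f g = (SUP x. \<bar>f x - g x\<bar>)"

definition ekur :: "'a::metric_space \<Rightarrow> ('a \<Rightarrow> real)" where
  "ekur y = (\<lambda>x. dist x y)"

definition geodesic_space :: "'a::metric_space itself \<Rightarrow> bool" where
  "geodesic_space _ \<longleftrightarrow> (\<forall>x y::'a. \<exists>\<gamma>::real \<Rightarrow> 'a. \<gamma> 0 = x \<and> \<gamma> (dist x y) = y \<and>
     (\<forall>s\<in>{0..dist x y}. \<forall>t\<in>{0..dist x y}. dist (\<gamma> s) (\<gamma> t) = \<bar>s - t\<bar>))"

definition discretely_geodesic :: "'a::metric_space itself \<Rightarrow> bool" where
  "discretely_geodesic _ \<longleftrightarrow> (\<forall>x y::'a. dist x y \<in> \<int>) \<and>
     (\<forall>x y::'a. \<exists>n::nat. dist x y = real n \<and> (\<exists>\<gamma>::nat \<Rightarrow> 'a. \<gamma> 0 = x \<and> \<gamma> n = y \<and>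
       (\<forall>i\<le>n. \<forall>j\<le>n. dist (\<gamma> i) (\<gamma> j) = \<bar>real i - real j\<bar>)))"

end

theory Submission
  imports Defs
begin

lemma Delta_nonneg: "f \<in> Delta \<Longrightarrow> f x \<ge> 0"
  unfolding Delta_def by (smt (verit) dist_self mem_Collect_eq)

lemma E_Delta: "f \<in> Ehull \<Longrightarrow> f \<in> Delta"
  unfolding Ehull_def by blast

lemma E_Deltad: "f \<in> Ehull \<Longrightarrow> dist x y \<le> f x + f y"
  using E_Delta unfolding Delta_def by blast

lemma E_approx:
  fixes f :: "'a::metric_space \<Rightarrow> real"
  assumes f: "f \<in> Ehull" and e: "e > 0"
  shows "\<exists>y. f x - e < dist x y - f y"
proof (rule ccontr)
  assume "\<not> ?thesis"
  hence H: "\<And>y. dist x y - f y \<le> f x - e" by (simp add: not_less)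
  have fD: "f \<in> Delta" using f E_Delta by blast
  have "f x \<noteq> 0" using H[of x] e by simp
  hence fx: "f x > 0" using Delta_nonneg[OF fD, of x] by simp
  define e' where "e' = min e (f x / 2)"
  have e'pos: "e' > 0" "e' \<le> e" "e' \<le> f x / 2" using e fx by (auto simp: e'_def)
  define g where "g = f(x := f x - e')"
  have gD: "g \<in> Delta"
    unfolding Delta_def
  proof (intro CollectI allI)
    fix a b
    show "dist a b \<le> g a + g b"
    proof (cases "a = x"; cases "b = x")
      assume "a = x" "b = x" thus ?thesis using e'pos fx by (simp add: g_def)
    next
      assume "a = x" "b \<noteq> x" thus ?thesis using H[of b] e'pos by (simp add: g_def)
    next
      assume "a \<noteq> x" "b = x" thus ?thesis using H[of a] e'pos by (simp add: g_def dist_commute)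
    next
      assume "a \<noteq> x" "b \<noteq> x" thus ?thesis using fD unfolding Delta_def by (simp add: g_def)
    qed
  qed
  have "g \<le> f" using e'pos by (simp add: g_def le_fun_def)
  hence "g = f" using f gD unfolding Ehull_def by blast
  hence "g x = f x" by simp
  thus False using e'pos by (simp add: g_def)
qed

lemma E_le:
  fixes f :: "'a::metric_space \<Rightarrow> real"
  assumes f: "f \<in> Ehull" and H: "\<And>y. dist x y - f y \<le> C"
  shows "f x \<le> C"
proof (rule field_le_epsilon)
  fix e :: real assume "e > 0"
  then obtain y where "f x - e < dist x y - f y" using E_approx[OF f] by blast
  thus "f x \<le> C + e" using H[of y] by simp
qed

lemma E_lip:
  fixes f :: "'a::metric_space \<Rightarrow> real"
  assumes f: "f \<in> Ehull"
  shows "f x \<le> f z + dist x z"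
proof (rule E_le[OF f])
  fix y
  have "dist x y \<le> dist x z + dist z y" by (rule dist_triangle)
  moreover have "dist z y \<le> f z + f y" using E_Deltad[OF f] .
  ultimately show "dist x y - f y \<le> f z + dist x z" by simp
qed

lemma pointwise:
  fixes f g :: "'a::metric_space \<Rightarrow> real"
  assumes f: "f \<in> Ehull" and g: "g \<in> Ehull"
    and H: "\<And>a b. dist a b - f a - g b \<le> C"
  shows "\<bar>f x - g x\<bar> \<le> C"
proof -
  have "f x \<le> C + g x"
    by (rule E_le[OF f]) (use H in \<open>smt (verit) dist_commute\<close>)
  moreover have "g x \<le> C + f x"
    by (rule E_le[OF g]) (use H in \<open>smt (verit) dist_commute\<close>)
  ultimately show ?thesis by simp
qed

lemma bound:
  fixes f g :: "'a::metric_space \<Rightarrow> real"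
  assumes f: "f \<in> Ehull" and g: "g \<in> Ehull"
  shows "dist a b - f a - g b \<le> f z + g z"
proof -
  have "dist a b \<le> dist a z + dist z b" by (rule dist_triangle)
  moreover have "dist a z \<le> f a + f z" using E_Deltad[OF f] .
  moreover have "dist z b \<le> g z + g b" using E_Deltad[OF g] .
  ultimately show ?thesis by simp
qed

lemma bdd:
  fixes f g :: "'a::metric_space \<Rightarrow> real"
  assumes f: "f \<in> Ehull" and g: "g \<in> Ehull"
  shows "bdd_above (range (\<lambda>x. \<bar>f x - g x\<bar>))"
  using pointwise[OF f g bound[OF f g]] by (intro bdd_aboveI2) blast

lemma K1:
  fixes f g :: "'a::metric_space \<Rightarrow> real"
  assumes f: "f \<in> Ehull" and g: "g \<in> Ehull"
  shows "dist a b - f a - g b \<le> supdist f g"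
proof -
  have "dist a b - f a - g b \<le> \<bar>f b - g b\<bar>" using E_Deltad[OF f, of a b] by simp
  also have "\<dots> \<le> supdist f g" unfolding supdist_def
    by (rule cSUP_upper[OF _ bdd[OF f g]]) simp
  finally show ?thesis .
qed

lemma K2:
  fixes f g :: "'a::metric_space \<Rightarrow> real"
  assumes f: "f \<in> Ehull" and g: "g \<in> Ehull"
    and H: "\<And>a b. dist a b - f a - g b \<le> C"
  shows "supdist f g \<le> C"
  unfolding supdist_def by (rule cSUP_least) (use pointwise[OF f g H] in auto)

lemma supdist_ekur:
  fixes f :: "'a::metric_space \<Rightarrow> real"
  assumes f: "f \<in> Ehull"
  shows "supdist f (ekur y) = f y"
proof -
  have b: "\<And>x. \<bar>f x - dist x y\<bar> \<le> f y"
    using E_Deltad[OF f] E_lip[OF f] by (smt (verit))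
  have "supdist f (ekur y) \<le> f y" unfolding supdist_def ekur_def
    by (rule cSUP_least) (use b in auto)
  moreover have "f y \<le> supdist f (ekur y)" unfolding supdist_def ekur_def
  proof -
    have "f y = \<bar>f y - dist y y\<bar>" using Delta_nonneg[OF E_Delta[OF f]] by simp
    also have "\<dots> \<le> (SUP x. \<bar>f x - dist x y\<bar>)"
      by (rule cSUP_upper) (use b in \<open>auto intro!: bdd_aboveI2[where M="f y"]\<close>)
    finally show "f y \<le> (SUP x. \<bar>f x - dist x y\<bar>)" .
  qed
  ultimately show ?thesis by simp
qed

lemma INF_le:
  fixes f :: "'a::metric_space \<Rightarrow> real"
  assumes f: "f \<in> Ehull" and H: "\<And>e. e > 0 \<Longrightarrow> \<exists>v. f v \<le> c + e"
  shows "(INF y. supdist f (ekur y)) \<le> c"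
proof (rule field_le_epsilon)
  fix e :: real assume "e > 0"
  then obtain v where v: "f v \<le> c + e" using H by blast
  have "(INF y. supdist f (ekur y)) \<le> supdist f (ekur v)"
    by (rule cINF_lower) (use supdist_ekur[OF f] Delta_nonneg[OF E_Delta[OF f]] in
        \<open>auto intro!: bdd_belowI2\<close>)
  thus "(INF y. supdist f (ekur y)) \<le> c + e" using v supdist_ekur[OF f] by simp
qed

lemma mid_est:
  fixes f :: "'a::metric_space \<Rightarrow> real"
  assumes f: "f \<in> Ehull" and hyp: "hyperbolic_on (UNIV::'a set) dist \<delta>"
  shows "f v \<le> max (dist v x + f y) (dist v y + f x) - dist x y + \<delta>"
proof (rule E_le[OF f])
  fix z
  have "dist v z + dist x y \<le> max (dist v x + dist z y) (dist z x + dist v y) + \<delta>"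
    using hyp unfolding hyperbolic_on_def by (metis UNIV_I dist_commute)
  moreover have "dist z y \<le> f z + f y" "dist z x \<le> f z + f x" using E_Deltad[OF f] by auto
  ultimately show "dist v z - f z \<le> max (dist v x + f y) (dist v y + f x) - dist x y + \<delta>"
    by (smt (verit))
qed

theorem proposition1p3:
  fixes \<delta> :: real
  assumes "\<delta> \<ge> 0"
    and "hyperbolic_on (UNIV::'a::metric_space set) dist \<delta>"
  shows "hyperbolic_on (Ehull :: ('a \<Rightarrow> real) set) supdist \<delta>
    \<and> (geodesic_space TYPE('a) \<longrightarrow>
           (\<forall>f \<in> (Ehull :: ('a \<Rightarrow> real) set). (INF y. supdist f (ekur y)) \<le> \<delta>))
    \<and> (discretely_geodesic TYPE('a) \<longrightarrow>
           (\<forall>f \<in> (Ehull :: ('a \<Rightarrow> real) set). (INF y. supdist f (ekur y)) \<le> \<delta> + 1/2))"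
proof -
  note hyp = assms(2)
  have P1: "hyperbolic_on (Ehull :: ('a \<Rightarrow> real) set) supdist \<delta>"
    unfolding hyperbolic_on_def
  proof (intro ballI)
    fix w x y z :: "'a \<Rightarrow> real"
    assume w: "w \<in> Ehull" and x: "x \<in> Ehull" and y: "y \<in> Ehull" and z: "z \<in> Ehull"
    define M where "M = max (supdist w y + supdist x z) (supdist x y + supdist w z) + \<delta>"
    have main: "(dist a b - w a - x b) + (dist c e - y c - z e) \<le> M" for a b c e
    proof -
      have "dist a b + dist c e \<le> max (dist a c + dist b e) (dist b c + dist a e) + \<delta>"
        using hyp unfolding hyperbolic_on_def by blast
      moreover have "dist a c - w a - y c \<le> supdist w y" by (rule K1[OF w y])
      moreover have "dist b e - x b - z e \<le> supdist x z" by (rule K1[OF x z])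
      moreover have "dist b c - x b - y c \<le> supdist x y" by (rule K1[OF x y])
      moreover have "dist a e - w a - z e \<le> supdist w z" by (rule K1[OF w z])
      ultimately show ?thesis unfolding M_def by (smt (verit))
    qed
    have "supdist y z \<le> M - supdist w x"
    proof (rule K2[OF y z])
      fix c e
      have "supdist w x \<le> M - (dist c e - y c - z e)"
        by (rule K2[OF w x]) (use main in \<open>smt (verit)\<close>)
      thus "dist c e - y c - z e \<le> M - supdist w x" by simp
    qed
    thus "supdist w x + supdist y z \<le> M" by simp
  qed
  have P2: "(INF y. supdist f (ekur y)) \<le> \<delta>"
    if G: "geodesic_space TYPE('a)" and f: "f \<in> Ehull" for f :: "'a \<Rightarrow> real"
  proof (rule INF_le[OF f])
    fix e :: real assume e: "e > 0"
    obtain x :: 'a where "True" by blast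
    obtain y where xy: "f x - e < dist x y - f y" using E_approx[OF f e] by blast
    obtain \<gamma> :: "real \<Rightarrow> 'a" where g0: "\<gamma> 0 = x" and gD: "\<gamma> (dist x y) = y"
      and gi: "\<forall>s\<in>{0..dist x y}. \<forall>t\<in>{0..dist x y}. dist (\<gamma> s) (\<gamma> t) = \<bar>s - t\<bar>"
      using G unfolding geodesic_space_def by blast
    define D where "D = dist x y"
    define s where "s = (D + f x - f y) / 2"
    have l1: "f x \<le> f y + D" "f y \<le> f x + D" using E_lip[OF f, of x y] E_lip[OF f, of y x]
      by (auto simp: D_def dist_commute)
    have sD: "s \<in> {0..D}" using l1 by (auto simp: s_def)
    have D0: "0 \<in> {0..D}" by (simp add: D_def)
    have DD: "D \<in> {0..D}" by (simp add: D_def)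
    have d1: "dist (\<gamma> s) x = s" using gi sD D0 g0 by (force simp: D_def)
    have d2: "dist (\<gamma> s) y = D - s"
    proof -
      have "dist (\<gamma> s) (\<gamma> D) = \<bar>s - D\<bar>" using gi sD DD by (simp add: D_def)
      thus ?thesis using gD sD by (simp add: D_def)
    qed
    have "f (\<gamma> s) \<le> max (dist (\<gamma> s) x + f y) (dist (\<gamma> s) y + f x) - dist x y + \<delta>"
      by (rule mid_est[OF f hyp])
    also have "\<dots> \<le> \<delta> + e" unfolding d1 d2 using xy e unfolding s_def D_def max_def by (simp add: field_simps)
    finally show "\<exists>v. f v \<le> \<delta> + e" by blast
  qed
  have P3: "(INF y. supdist f (ekur y)) \<le> \<delta> + 1/2"
    if G: "discretely_geodesic TYPE('a)" and f: "f \<in> Ehull" for f :: "'a \<Rightarrow> real"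
  proof (rule INF_le[OF f])
    fix e :: real assume e: "e > 0"
    obtain x :: 'a where "True" by blast
    obtain y where xy: "f x - e < dist x y - f y" using E_approx[OF f e] by blast
    obtain n :: nat and \<gamma> :: "nat \<Rightarrow> 'a" where nD: "dist x y = real n" and g0: "\<gamma> 0 = x"
      and gD: "\<gamma> n = y"
      and gi: "\<forall>i\<le>n. \<forall>j\<le>n. dist (\<gamma> i) (\<gamma> j) = \<bar>real i - real j\<bar>"
      using G unfolding discretely_geodesic_def by blast
    define D where "D = dist x y"
    define s where "s = (D + f x - f y) / 2"
    have l1: "f x \<le> f y + D" "f y \<le> f x + D" using E_lip[OF f, of x y] E_lip[OF f, of y x]
      by (auto simp: D_def dist_commute)
    have sD: "0 \<le> s" "s \<le> D" using l1 by (auto simp: s_def)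
    define k where "k = nat \<lfloor>s + 1/2\<rfloor>"
    have fl: "real_of_int \<lfloor>s + 1/2\<rfloor> \<le> s + 1/2" "s + 1/2 < real_of_int \<lfloor>s + 1/2\<rfloor> + 1"
      by linarith+
    have fl0: "\<lfloor>s + 1/2\<rfloor> \<ge> 0" using sD by linarith
    have kr: "real k = real_of_int \<lfloor>s + 1/2\<rfloor>" using fl0 by (simp add: k_def)
    have kn: "k \<le> n"
    proof -
      have "\<lfloor>s + 1/2\<rfloor> \<le> \<lfloor>D + 1/2\<rfloor>" using sD by (intro floor_mono) simp
      also have "\<lfloor>D + 1/2\<rfloor> = int n" using nD by (simp add: D_def)
      finally show ?thesis using fl0 by (simp add: k_def)
    qed
    have ks: "\<bar>real k - s\<bar> \<le> 1/2" unfolding kr abs_le_iff using fl by linarith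
    have d1: "dist (\<gamma> k) x = real k" using gi kn g0 by force
    have d2: "dist (\<gamma> k) y = D - real k" using gi kn gD nD by (force simp: D_def)
    have "f (\<gamma> k) \<le> max (dist (\<gamma> k) x + f y) (dist (\<gamma> k) y + f x) - dist x y + \<delta>"
      by (rule mid_est[OF f hyp])
    also have "\<dots> \<le> \<delta> + 1/2 + e" unfolding d1 d2 using xy e ks E_Deltad[OF f, of x y] unfolding s_def D_def max_def abs_le_iff by (simp add: field_simps)
    finally show "\<exists>v. f v \<le> \<delta> + 1/2 + e" by blast
  qed
  show ?thesis using P1 P2 P3 by blast
qed

end
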